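(* Let $H=\mathbb C^m$ and let $\phi\colon M_n\to M_m$ be linear. Then $\phi$ is positive if and only if $C_{\phi^t}\in P(M_n,S(H))$, if and only if $C_\phi\in P(M_n,S(H))$. Hence $P(M_n,S(H))=\{C_\phi:\phi\colon M_n\to M_m \text{ linear and positive}\}$.
   Context: $M_n$ denotes the complex $n\times n$ matrices, $(e_{ij})$ a complete set of matrix units of $M_n$, $t$ the transpose map, $\phi^t=t\circ\phi\circ t$, and $C_\phi=\sum_{i,j}e_{ij}\otimes\phi(e_{ij})\in M_n\otimes M_m$ the Choi matrix of $\phi$. $S(H)$ is the closed cone of linear maps $M_m\to M_m$ generated by maps $x\mapsto\sum_{i=1}^k\omega_i(x)a_i$ with $\omega_i$ states of $M_m$ and $a_i\in M_m$ positive. $P(M_n,S(H))=\{x\in M_n\otimes M_m:(\iota\otimes\alpha)(x)\ge0\ \forall\alpha\in S(H)\}$, where $\iota$ is the identity map of $M_n$. *)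

theory Defs
  imports "HOL-Analysis.Analysis"
begin

text \<open>Complex n x n matrices are modelled as complex^'n^'n ('n a finite type, n = CARD('n)).
  The tensor product M_n (x) M_m is modelled as complex^('n*'m)^('n*'m), with the
  Kronecker convention (a (x) b) at ((i,k),(j,l)) = a at (i,j) times b at (k,l).\<close>

definition cnonneg :: "complex \<Rightarrow> bool" where
  "cnonneg z \<longleftrightarrow> Im z = 0 \<and> 0 \<le> Re z"

definition psd :: "complex^'k^'k \<Rightarrow> bool" where
  "psd A \<longleftrightarrow> (\<forall>v :: complex^'k. cnonneg (\<Sum>i\<in>UNIV. \<Sum>j\<in>UNIV. cnj (v $ i) * A $ i $ j * v $ j))"

definition smat :: "complex \<Rightarrow> complex^'k^'l \<Rightarrow> complex^'k^'l" where
  "smat c A = (\<chi> i j. c * A $ i $ j)"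

definition mlinear :: "(complex^'a^'a \<Rightarrow> complex^'b^'b) \<Rightarrow> bool" where
  "mlinear f \<longleftrightarrow> (\<forall>A B. f (A + B) = f A + f B) \<and> (\<forall>c A. f (smat c A) = smat c (f A))"

definition flinear :: "(complex^'a^'a \<Rightarrow> complex) \<Rightarrow> bool" where
  "flinear f \<longleftrightarrow> (\<forall>A B. f (A + B) = f A + f B) \<and> (\<forall>c A. f (smat c A) = c * f A)"

definition positive_map :: "(complex^'a^'a \<Rightarrow> complex^'b^'b) \<Rightarrow> bool" where
  "positive_map f \<longleftrightarrow> (\<forall>A. psd A \<longrightarrow> psd (f A))"

definition state :: "(complex^'a^'a \<Rightarrow> complex) \<Rightarrow> bool" where
  "state w \<longleftrightarrow> flinear w \<and> (\<forall>A. psd A \<longrightarrow> cnonneg (w A)) \<and> w (mat 1) = 1"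

definition transpose_map :: "(complex^'a^'a \<Rightarrow> complex^'b^'b) \<Rightarrow> (complex^'a^'a \<Rightarrow> complex^'b^'b)" where
  "transpose_map f = transpose \<circ> f \<circ> transpose"

definition matunit :: "'a \<Rightarrow> 'a \<Rightarrow> complex^'a^'a" where
  "matunit i j = (\<chi> a b. if a = i \<and> b = j then 1 else 0)"

definition kron :: "complex^'a^'a \<Rightarrow> complex^'b^'b \<Rightarrow> complex^('a \<times> 'b)^('a \<times> 'b)" where
  "kron A B = (\<chi> p q. A $ fst p $ fst q * B $ snd p $ snd q)"

definition choi :: "(complex^'a^'a \<Rightarrow> complex^'b^'b) \<Rightarrow> complex^('a \<times> 'b)^('a \<times> 'b)" where
  "choi f = (\<Sum>i\<in>UNIV. \<Sum>j\<in>UNIV. kron (matunit i j) (f (matunit i j)))"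

definition S_gen :: "(complex^'b^'b \<Rightarrow> complex^'b^'b) set" where
  "S_gen = {(\<lambda>x. \<Sum>i<k. smat (w i x) (a i)) | (k::nat) (w :: nat \<Rightarrow> complex^'b^'b \<Rightarrow> complex) (a :: nat \<Rightarrow> complex^'b^'b).
              (\<forall>i<k. state (w i) \<and> psd (a i))}"

definition S_cone :: "(complex^'b^'b \<Rightarrow> complex^'b^'b) set" where
  "S_cone = {(\<lambda>x. \<Sum>j<N. c j *\<^sub>R g j x) | (N::nat) (c :: nat \<Rightarrow> real) (g :: nat \<Rightarrow> complex^'b^'b \<Rightarrow> complex^'b^'b). (\<forall>j<N. 0 \<le> c j \<and> g j \<in> S_gen)}"

text \<open>S(H): the closed cone (closure in the natural topology on maps M_m \<rightarrow> M_m,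
  i.e. pointwise convergence, which agrees with the norm topology on linear maps).\<close>
definition SH :: "(complex^'b^'b \<Rightarrow> complex^'b^'b) set" where
  "SH = closure S_cone"

text \<open>(iota (x) alpha)(x): apply alpha to each n-block of x.\<close>
definition id_tensor :: "(complex^'b^'b \<Rightarrow> complex^'b^'b) \<Rightarrow> complex^('a::finite \<times> 'b)^('a \<times> 'b) \<Rightarrow> complex^('a \<times> 'b)^('a \<times> 'b)" where
  "id_tensor \<alpha> x = (\<chi> p q. \<alpha> (\<chi> k l. x $ (fst p, k) $ (fst q, l)) $ snd p $ snd q)"

definition PMS :: "(complex^('a::finite \<times> 'b::finite)^('a \<times> 'b)) set" where
  "PMS = {x. \<forall>\<alpha>\<in>SH. psd (id_tensor \<alpha> x)}"

end

theory Submission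
  imports Defs
begin

definition quad :: "'k set \<Rightarrow> ('k \<Rightarrow> 'k \<Rightarrow> complex) \<Rightarrow> ('k \<Rightarrow> complex) \<Rightarrow> complex" where
  "quad S A v = (\<Sum>i\<in>S. \<Sum>j\<in>S. cnj (v i) * A i j * v j)"

lemma ifz_mult: "(if P then x else 0) * (y::complex) = (if P then x * y else 0)"
  "(y::complex) * (if P then x else 0) = (if P then y * x else 0)"
  "cnj (if P then x else 0) = (if P then cnj x else 0)" by auto

lemma quad_two:
  assumes "finite S" "i \<in> S" "j \<in> S"
  shows "quad S A (\<lambda>k. (if k = i then a else 0) + (if k = j then b else 0))
       = cnj a * (A i i * a + A i j * b) + cnj b * (A j i * a + A j j * b)"
  using assms by (simp add: quad_def distrib_left distrib_right sum.distrib ifz_mult sum.delta sum.delta')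

lemma cnonneg_iff: "cnonneg z \<longleftrightarrow> Im z = 0 \<and> 0 \<le> Re z" by (simp add: cnonneg_def)

lemma herm:
  assumes "finite S" "\<And>v. cnonneg (quad S A v)" "i \<in> S" "j \<in> S"
  shows "A j i = cnj (A i j)"
proof -
  have d: "Im (A k k) = 0" if "k \<in> S" for k
    using assms(2)[of "\<lambda>l. (if l = k then 1 else 0) + (if l = k then 0 else 0)"] quad_two[OF assms(1) that that, of A 1 0]
    by (simp add: cnonneg_def)
  have 1: "Im (quad S A (\<lambda>k. (if k = i then 1 else 0) + (if k = j then 1 else 0))) = 0"
    using assms(2) cnonneg_def by blast
  have 2: "Im (quad S A (\<lambda>k. (if k = i then 1 else 0) + (if k = j then \<i> else 0))) = 0"
    using assms(2) cnonneg_def by blast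
  from 1 2 d[OF assms(3)] d[OF assms(4)] show ?thesis
    unfolding quad_two[OF assms(1,3,4)]
    by (simp add: complex_eq_iff algebra_simps)
qed

lemma quad_insert:
  assumes "finite T" "p \<notin> T"
  shows "quad (insert p T) A v = cnj (v p) * A p p * v p + cnj (v p) * (\<Sum>j\<in>T. A p j * v j)
      + (\<Sum>i\<in>T. cnj (v i) * A i p) * v p + quad T A v"
  using assms by (simp add: quad_def sum.distrib sum_distrib_left sum_distrib_right algebra_simps)

lemma quad_cong: "(\<And>k. k \<in> S \<Longrightarrow> v k = v' k) \<Longrightarrow> quad S A v = quad S A v'"
  by (simp add: quad_def)

lemma diag_nonneg:
  assumes "finite S" "\<And>v. cnonneg (quad S A v)" "p \<in> S"
  shows "cnonneg (A p p)"
  using assms(2)[of "\<lambda>k. (if k = p then 1 else 0) + (if k = p then 0 else 0)"] quad_two[OF assms(1,3,3), of A 1 0]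
  by simp

lemma zero_row:
  assumes "finite S" "\<And>v. cnonneg (quad S A v)" "p \<in> S" "j \<in> S" "A p p = 0"
  shows "A p j = 0"
proof (rule ccontr)
  assume ne: "A p j \<noteq> 0"
  define x where "x = A p j"
  define m where "m = (Re x)^2 + (Im x)^2"
  have m: "m > 0" using ne unfolding m_def x_def
    by (metis add_nonneg_nonneg complex_eq_iff zero_complex.simps(1,2) sum_power2_gt_zero_iff)
  define s where "s = (Re (A j j) + 1) / (2 * m)"
  define t where "t = - of_real s * x"
  have h: "A j p = cnj x" using herm[OF assms(1,2,3,4)] x_def by simp
  have "cnonneg (quad S A (\<lambda>k. (if k = p then t else 0) + (if k = j then 1 else 0)))" by fact
  hence "0 \<le> Re (cnj t * (A p p * t + A p j * 1) + cnj 1 * (A j p * t + A j j * 1))"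
    unfolding quad_two[OF assms(1,3,4)] cnonneg_def by blast
  also have "Re (cnj t * (A p p * t + A p j * 1) + cnj 1 * (A j p * t + A j j * 1)) = - 2 * s * m + Re (A j j)"
    using assms(5) h unfolding t_def m_def x_def by (simp add: algebra_simps power2_eq_square)
  also have "\<dots> = -1" using m unfolding s_def by (simp add: field_simps)
  finally show False by simp
qed

lemma alg1: fixes c Q :: complex and d sq :: real
  assumes "sq > 0" "sq * sq = d"
  shows "Q - (cnj c / of_real sq) * (c / of_real sq) =
    cnj (- c / of_real d) * of_real d * (- c / of_real d) + cnj (- c / of_real d) * c + cnj c * (- c / of_real d) + Q"
proof -
  have d: "d > 0" using assms by (metis mult_pos_pos)
  have h1: "(cnj c / of_real sq) * (c / of_real sq) = cnj c * c / of_real d"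
  proof -
    have e: "(of_real sq * of_real sq :: complex) = of_real d" using assms by (simp flip: of_real_mult)
    show ?thesis unfolding times_divide_times_eq e by (simp add: mult.commute)
  qed
  have h2: "cnj (- c / of_real d) = - cnj c / of_real d" by simp
  show ?thesis unfolding h1 h2 using d by (simp add: field_simps)
qed
lemma alg2: fixes a b :: complex and d sq :: real
  assumes "sq > 0" "sq * sq = d"
  shows "(a / of_real sq) * cnj (b / of_real sq) = a * cnj b / of_real d"
proof -
  have e: "(of_real sq * of_real sq :: complex) = of_real d" using assms by (simp flip: of_real_mult)
  show ?thesis unfolding complex_cnj_divide complex_cnj_complex_of_real times_divide_times_eq e ..
qed

lemma psd_decomp:
  assumes "finite S" "\<And>v. cnonneg (quad S A v)"
  shows "\<exists>N w. \<forall>i\<in>S. \<forall>j\<in>S. A i j = (\<Sum>r<(N::nat). w r i * cnj (w r j))"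
  using assms
proof (induction S arbitrary: A rule: finite_induct)
  case empty
  then show ?case by auto
next
  case (insert p T)
  let ?S = "insert p T"
  have fS: "finite ?S" using insert by simp
  have H: "\<And>i j. i \<in> ?S \<Longrightarrow> j \<in> ?S \<Longrightarrow> A j i = cnj (A i j)"
    using herm[OF fS insert.prems] by blast
  have dp: "cnonneg (A p p)" using diag_nonneg[OF fS insert.prems] by simp
  show ?case
  proof (cases "A p p = 0")
    case True
    have Z: "A p j = 0" "A j p = 0" if "j \<in> ?S" for j
      using zero_row[OF fS insert.prems _ that True] H[OF _ that, of p] by auto
    have "cnonneg (quad T A v)" for v
    proof -
      have "quad ?S A (v(p:=0)) = quad T A (v(p:=0))"
        using quad_insert[OF insert.hyps(1,2)] by simp
      also have "\<dots> = quad T A v" using insert.hyps(2) by (intro quad_cong) auto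
      finally show ?thesis using insert.prems by metis
    qed
    from insert.IH[of A, OF this] obtain N w where w: "\<forall>i\<in>T. \<forall>j\<in>T. A i j = (\<Sum>r<(N::nat). w r i * cnj (w r j))"
      by blast
    define w' where "w' r k = (if k = p then 0 else w r k)" for r k
    have "\<forall>i\<in>?S. \<forall>j\<in>?S. A i j = (\<Sum>r<N. w' r i * cnj (w' r j))"
    proof (intro ballI)
      fix i j assume ij: "i \<in> ?S" "j \<in> ?S"
      show "A i j = (\<Sum>r<N. w' r i * cnj (w' r j))"
      proof (cases "i = p \<or> j = p")
        case True then show ?thesis using Z ij unfolding w'_def by auto
      next
        case False then show ?thesis using w ij unfolding w'_def by auto
      qed
    qed
    then show ?thesis by blast
  next
    case False
    define d where "d = Re (A p p)"
    have App: "A p p = of_real d" using dp unfolding d_def cnonneg_def by (simp add: complex_eq_iff)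
    have d0: "d > 0" using dp False App unfolding d_def cnonneg_def
      by (metis less_eq_real_def of_real_0)
    define sq where "sq = sqrt d"
    have sq: "sq > 0" "sq * sq = d" using d0 unfolding sq_def by auto
    define u where "u k = A k p / of_real sq" for k
    define A' where "A' i j = A i j - u i * cnj (u j)" for i j
    have "cnonneg (quad T A' v)" for v
    proof -
      define c where "c = (\<Sum>j\<in>T. A p j * v j)"
      define t where "t = - c / A p p"
      have Hp: "A i p = cnj (A p i)" if "i \<in> T" for i using H[of p i] that by simp
      have Hp': "cnj (A i p) = A p i" if "i \<in> T" for i using Hp[OF that] by simp
      have c': "(\<Sum>i\<in>T. cnj (v i) * A i p) = cnj c"
        unfolding c_def cnj_sum by (intro sum.cong refl) (simp add: Hp mult.commute)
      have e1: "quad ?S A (v(p:=t)) = cnj t * A p p * t + cnj t * c + cnj c * t + quad T A v"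
      proof -
        have a: "quad T A (v(p:=t)) = quad T A v" using insert.hyps(2) by (intro quad_cong) auto
        have b: "(\<Sum>j\<in>T. A p j * (v(p:=t)) j) = c" unfolding c_def using insert.hyps(2) by (intro sum.cong) auto
        have b2: "(\<Sum>i\<in>T. cnj ((v(p:=t)) i) * A i p) = cnj c" unfolding c'[symmetric]
          using insert.hyps(2) by (intro sum.cong) auto
        show ?thesis using quad_insert[OF insert.hyps(1,2), of A "v(p:=t)"] a b b2 by simp
      qed
      have e2: "quad T A' v = quad T A v - (\<Sum>i\<in>T. cnj (v i) * u i) * (\<Sum>j\<in>T. cnj (u j) * v j)"
      proof -
        have "(\<Sum>i\<in>T. cnj (v i) * u i) * (\<Sum>j\<in>T. cnj (u j) * v j) = (\<Sum>i\<in>T. \<Sum>j\<in>T. cnj (v i) * (u i * cnj (u j)) * v j)"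
          unfolding sum_product by (intro sum.cong refl) (simp add: ac_simps)
        then show ?thesis unfolding quad_def A'_def
          by (simp add: right_diff_distrib left_diff_distrib sum_subtractf)
      qed
      have e3: "(\<Sum>i\<in>T. cnj (v i) * u i) = cnj c / of_real sq"
        unfolding u_def c'[symmetric] by (simp add: sum_divide_distrib)
      have e4: "(\<Sum>j\<in>T. cnj (u j) * v j) = c / of_real sq"
        unfolding u_def c_def sum_divide_distrib by (intro sum.cong refl) (simp add: Hp')
      have "quad T A' v = quad ?S A (v(p:=t))"
        unfolding e1 e2 e3 e4 unfolding t_def App by (rule alg1[OF sq])
      then show ?thesis using insert.prems by simp
    qed
    from insert.IH[of A', OF this] obtain N w where w: "\<forall>i\<in>T. \<forall>j\<in>T. A' i j = (\<Sum>r<(N::nat). w r i * cnj (w r j))"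
      by blast
    define W where "W r k = (if r < N then (if k = p then 0 else w r k) else u k)" for r k
    have sumW: "(\<Sum>r<Suc N. W r i * cnj (W r j)) = (\<Sum>r<N. W r i * cnj (W r j)) + u i * cnj (u j)" for i j
      by (simp add: W_def)
    have "A i j = (\<Sum>r<Suc N. W r i * cnj (W r j))" if "i \<in> ?S" "j \<in> ?S" for i j
    proof -
      have uu: "u i * cnj (u j) = A i p * A p j / of_real d"
        unfolding u_def alg2[OF sq] using H[OF that(2), of p] by simp
      show ?thesis
      proof (cases "i = p \<or> j = p")
        case True
        have "(\<Sum>r<N. W r i * cnj (W r j)) = 0" using True unfolding W_def by auto
        have dn: "(of_real d :: complex) \<noteq> 0" using d0 by simp
        have sw: "(\<Sum>r<Suc N. W r i * cnj (W r j)) = A i p * A p j / of_real d"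
          unfolding sumW uu \<open>(\<Sum>r<N. W r i * cnj (W r j)) = 0\<close> by simp
        have "A i p * A p j / of_real d = A i j"
        proof (cases "i = p")
          case True then show ?thesis using App dn by simp
        next
          case False then have "j = p" using \<open>i = p \<or> j = p\<close> by simp
          then show ?thesis using App dn by simp
        qed
        then show ?thesis using sw by simp
      next
        case False
        hence "i \<in> T" "j \<in> T" using that by auto
        have "(\<Sum>r<N. W r i * cnj (W r j)) = A' i j" using w \<open>i \<in> T\<close> \<open>j \<in> T\<close> False unfolding W_def by simp
        then show ?thesis unfolding sumW A'_def by simp
      qed
    qed
    then show ?thesis by blast
  qed
qed

lemma cnonneg_sum: "(\<And>x. x \<in> S \<Longrightarrow> cnonneg (f x)) \<Longrightarrow> cnonneg (sum f S)"
  unfolding cnonneg_def by (simp add: Im_sum Re_sum sum_nonneg)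

lemma cnonneg_scale: "0 \<le> c \<Longrightarrow> cnonneg z \<Longrightarrow> cnonneg (of_real c * z)"
  unfolding cnonneg_def by simp

lemma psd_quad: "psd M \<longleftrightarrow> (\<forall>v. cnonneg (quad UNIV (\<lambda>i j. M$i$j) v))"
proof
  assume h: "psd M"
  show "\<forall>v. cnonneg (quad UNIV (\<lambda>i j. M$i$j) v)"
  proof
    fix v :: "'a \<Rightarrow> complex"
    have "cnonneg (\<Sum>i\<in>UNIV. \<Sum>j\<in>UNIV. cnj ((\<chi> k. v k) $ i) * M $ i $ j * (\<chi> k. v k) $ j)"
      using h unfolding psd_def by blast
    then show "cnonneg (quad UNIV (\<lambda>i j. M$i$j) v)" unfolding quad_def by simp
  qed
next
  assume h: "\<forall>v. cnonneg (quad UNIV (\<lambda>i j. M$i$j) v)"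
  show "psd M" unfolding psd_def
  proof
    fix v :: "complex^'a"
    show "cnonneg (\<Sum>i\<in>UNIV. \<Sum>j\<in>UNIV. cnj (v $ i) * M $ i $ j * v $ j)"
      using h[rule_format, of "\<lambda>k. v $ k"] unfolding quad_def by simp
  qed
qed

lemma frob:
  fixes A W :: "complex^'k^'k"
  assumes "psd A" "psd W"
  shows "cnonneg (\<Sum>i\<in>UNIV. \<Sum>j\<in>UNIV. A$i$j * W$i$j)"
proof -
  obtain N w where w: "\<forall>i\<in>UNIV. \<forall>j\<in>UNIV. A$i$j = (\<Sum>r<(N::nat). w r i * cnj (w r j))"
    using psd_decomp[of UNIV "\<lambda>i j. A$i$j"] assms(1) unfolding psd_quad by auto
  have "(\<Sum>i\<in>UNIV. \<Sum>j\<in>UNIV. A$i$j * W$i$j) = (\<Sum>i\<in>UNIV. \<Sum>j\<in>UNIV. \<Sum>r<N. w r i * cnj (w r j) * W$i$j)"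
    using w by (simp add: sum_distrib_right)
  also have "\<dots> = (\<Sum>i\<in>UNIV. \<Sum>r<N. \<Sum>j\<in>UNIV. w r i * cnj (w r j) * W$i$j)"
    by (rule sum.cong[OF refl], rule sum.swap)
  also have "\<dots> = (\<Sum>r<N. \<Sum>i\<in>UNIV. \<Sum>j\<in>UNIV. w r i * cnj (w r j) * W$i$j)"
    by (rule sum.swap)
  also have "\<dots> = (\<Sum>r<N. quad UNIV (\<lambda>i j. W$i$j) (\<lambda>k. cnj (w r k)))"
    unfolding quad_def by (simp add: ac_simps)
  also have "cnonneg \<dots>" using assms(2) unfolding psd_quad by (intro cnonneg_sum) auto
  finally show ?thesis .
qed

lemma smat_zero: "smat 0 A = 0" by (simp add: smat_def vec_eq_iff)

lemma mlinear_0: "mlinear f \<Longrightarrow> f 0 = 0"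
  unfolding mlinear_def by (metis smat_zero)

lemma mlinear_sum: "mlinear f \<Longrightarrow> f (sum g S) = (\<Sum>x\<in>S. f (g x))"
proof (induction S rule: infinite_finite_induct)
  case (infinite S) then show ?case by (simp add: mlinear_0)
next
  case empty then show ?case by (simp add: mlinear_0)
next
  case (insert x F) then show ?case by (simp add: mlinear_def)
qed

lemma flinear_0: "flinear f \<Longrightarrow> f 0 = 0"
  unfolding flinear_def by (metis smat_zero mult_zero_left)

lemma flinear_sum: "flinear f \<Longrightarrow> f (sum g S) = (\<Sum>x\<in>S. f (g x))"
proof (induction S rule: infinite_finite_induct)
  case (infinite S) then show ?case by (simp add: flinear_0)
next
  case empty then show ?case by (simp add: flinear_0)
next
  case (insert x F) then show ?case by (simp add: flinear_def)
qed

lemma sum_if_const: "(\<Sum>x\<in>S. if P then f x else 0) = (if P then (\<Sum>x\<in>S. f x) else 0)" by simp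

lemma if_conj_zero: "(if P \<and> Q then a else 0) = (if P then (if Q then a else 0) else 0)" by simp

lemma mat_expand: "X = (\<Sum>i\<in>UNIV. \<Sum>j\<in>UNIV. smat (X$i$j) (matunit i j))"
proof -
  have "(smat (X$i$j) (matunit i j))$a$b = (if i = a then (if j = b then X$i$j else 0) else 0)" for i j a b
    by (simp add: smat_def matunit_def)
  then show ?thesis by (simp add: sum_if_const vec_eq_iff)
qed

lemma mlinear_expand: assumes "mlinear f" shows "f X = (\<Sum>i\<in>UNIV. \<Sum>j\<in>UNIV. smat (X$i$j) (f (matunit i j)))"
proof -
  have "f X = f (\<Sum>i\<in>UNIV. \<Sum>j\<in>UNIV. smat (X$i$j) (matunit i j))" by (rule arg_cong[where f=f], rule mat_expand)
  also have "\<dots> = (\<Sum>i\<in>UNIV. \<Sum>j\<in>UNIV. f (smat (X$i$j) (matunit i j)))"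
    using assms by (simp add: mlinear_sum)
  also have "\<dots> = (\<Sum>i\<in>UNIV. \<Sum>j\<in>UNIV. smat (X$i$j) (f (matunit i j)))"
    using assms unfolding mlinear_def by presburger
  finally show ?thesis .
qed

lemma flinear_expand: "flinear w \<Longrightarrow> mlinear f \<Longrightarrow> w (f X) = (\<Sum>i\<in>UNIV. \<Sum>j\<in>UNIV. X$i$j * w (f (matunit i j)))"
proof -
  assume w: "flinear w" and f: "mlinear f"
  have "w (f X) = w (\<Sum>i\<in>UNIV. \<Sum>j\<in>UNIV. smat (X$i$j) (f (matunit i j)))"
    by (rule arg_cong[where f=w], rule mlinear_expand[OF f])
  also have "\<dots> = (\<Sum>i\<in>UNIV. \<Sum>j\<in>UNIV. w (smat (X$i$j) (f (matunit i j))))"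
    using w by (simp add: flinear_sum)
  also have "\<dots> = (\<Sum>i\<in>UNIV. \<Sum>j\<in>UNIV. X$i$j * w (f (matunit i j)))"
    using w unfolding flinear_def by presburger
  finally show ?thesis .
qed

lemma block_choi: "id_tensor \<alpha> (choi \<psi>) = (\<chi> p q. \<alpha> (\<psi> (matunit (fst p) (fst q))) $ snd p $ snd q)"
proof -
  have "(\<chi> k l. choi \<psi> $ (i, k) $ (j, l)) = \<psi> (matunit i j)" for i j
    by (simp add: vec_eq_iff choi_def kron_def matunit_def ifz_mult if_conj_zero sum_if_const sum.delta sum.delta' cong: if_cong)
  then show ?thesis unfolding id_tensor_def by simp
qed

lemma sum_pair: "(\<Sum>p\<in>UNIV. f p) = (\<Sum>a\<in>UNIV. \<Sum>b\<in>UNIV. f (a, b))"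
proof -
  have "(\<Sum>a\<in>UNIV. \<Sum>b\<in>UNIV. f (a,b)) = (\<Sum>(a,b)\<in>UNIV\<times>UNIV. f (a,b))" by (rule sum.cartesian_product)
  then show ?thesis by simp
qed

definition Qf :: "(complex^'m^'m \<Rightarrow> complex^'m^'m) \<Rightarrow> (complex^'n^'n \<Rightarrow> complex^'m^'m) \<Rightarrow> complex^('n \<times> 'm) \<Rightarrow> complex" where
  "Qf \<alpha> \<psi> z = (\<Sum>p\<in>UNIV. \<Sum>q\<in>UNIV. cnj (z$p) * \<alpha> (\<psi> (matunit (fst p) (fst q))) $ snd p $ snd q * z$q)"

lemma psd_choi: "psd (id_tensor \<alpha> (choi \<psi>)) \<longleftrightarrow> (\<forall>z. cnonneg (Qf \<alpha> \<psi> z))"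
  unfolding block_choi psd_def Qf_def by simp

lemma sum_swap4: "(\<Sum>i\<in>A. \<Sum>j\<in>B. \<Sum>k\<in>C. \<Sum>l\<in>D. f i j k l) = (\<Sum>k\<in>C. \<Sum>l\<in>D. \<Sum>i\<in>A. \<Sum>j\<in>B. f i j k l)"
proof -
  have "(\<Sum>i\<in>A. \<Sum>j\<in>B. \<Sum>k\<in>C. \<Sum>l\<in>D. f i j k l) = (\<Sum>i\<in>A. \<Sum>k\<in>C. \<Sum>j\<in>B. \<Sum>l\<in>D. f i j k l)"
    by (rule sum.cong[OF refl], rule sum.swap)
  also have "\<dots> = (\<Sum>i\<in>A. \<Sum>k\<in>C. \<Sum>l\<in>D. \<Sum>j\<in>B. f i j k l)"
    by (rule sum.cong[OF refl], rule sum.cong[OF refl], rule sum.swap)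
  also have "\<dots> = (\<Sum>k\<in>C. \<Sum>i\<in>A. \<Sum>l\<in>D. \<Sum>j\<in>B. f i j k l)"
    by (rule sum.swap)
  also have "\<dots> = (\<Sum>k\<in>C. \<Sum>l\<in>D. \<Sum>i\<in>A. \<Sum>j\<in>B. f i j k l)"
    by (rule sum.cong[OF refl], rule sum.swap)
  finally show ?thesis .
qed

lemma Qf_sum: "Qf (\<lambda>x. \<Sum>j\<in>J. h j x) \<psi> z = (\<Sum>j\<in>J. Qf (h j) \<psi> z)"
proof -
  have "Qf (\<lambda>x. \<Sum>j\<in>J. h j x) \<psi> z = (\<Sum>p\<in>UNIV. \<Sum>q\<in>UNIV. \<Sum>j\<in>J. cnj (z$p) * h j (\<psi> (matunit (fst p) (fst q))) $ snd p $ snd q * z$q)"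
    unfolding Qf_def by (simp add: sum_distrib_left sum_distrib_right)
  also have "\<dots> = (\<Sum>p\<in>UNIV. \<Sum>j\<in>J. \<Sum>q\<in>UNIV. cnj (z$p) * h j (\<psi> (matunit (fst p) (fst q))) $ snd p $ snd q * z$q)"
    by (rule sum.cong[OF refl], rule sum.swap)
  also have "\<dots> = (\<Sum>j\<in>J. Qf (h j) \<psi> z)"
    unfolding Qf_def by (rule sum.swap)
  finally show ?thesis .
qed

lemma scaleR_comp2: "(c *\<^sub>R (X::complex^'a^'b)) $ a $ b = of_real c * X$a$b"
  unfolding vector_scaleR_component by (rule scaleR_conv_of_real)

lemma Qf_scale: "Qf (\<lambda>x. c *\<^sub>R g x) \<psi> z = of_real c * Qf g \<psi> z"
  unfolding Qf_def scaleR_comp2 by (simp add: sum_distrib_left ac_simps)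

lemma sum_pair2: "(\<Sum>p\<in>UNIV. \<Sum>q\<in>UNIV. F p q) = (\<Sum>i\<in>UNIV. \<Sum>k\<in>UNIV. \<Sum>j\<in>UNIV. \<Sum>l\<in>UNIV. F (i,k) (j,l))"
  by (simp add: sum_pair)

lemma Qf_gen:
  assumes w: "flinear w" and f: "mlinear \<psi>"
  shows "Qf (\<lambda>x. smat (w x) a) \<psi> z = w (\<psi> (\<chi> i j. \<Sum>k\<in>UNIV. \<Sum>l\<in>UNIV. cnj (z$(i,k)) * a$k$l * z$(j,l)))"
proof -
  have "Qf (\<lambda>x. smat (w x) a) \<psi> z = (\<Sum>i\<in>UNIV. \<Sum>k\<in>UNIV. \<Sum>j\<in>UNIV. \<Sum>l\<in>UNIV.
      cnj (z$(i,k)) * a$k$l * z$(j,l) * w (\<psi> (matunit i j)))"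
    unfolding Qf_def
    apply (subst sum_pair2)
    apply (simp only: fst_conv snd_conv smat_def vec_lambda_beta)
    apply (rule sum.cong[OF refl])+
    apply (simp only: ac_simps)
    done
  also have "\<dots> = (\<Sum>i\<in>UNIV. \<Sum>j\<in>UNIV. \<Sum>k\<in>UNIV. \<Sum>l\<in>UNIV.
      cnj (z$(i,k)) * a$k$l * z$(j,l) * w (\<psi> (matunit i j)))"
    by (rule sum.cong[OF refl], rule sum.swap)
  also have "\<dots> = (\<Sum>i\<in>UNIV. \<Sum>j\<in>UNIV. (\<chi> i j. \<Sum>k\<in>UNIV. \<Sum>l\<in>UNIV. cnj (z$(i,k)) * a$k$l * z$(j,l)) $ i $ j * w (\<psi> (matunit i j)))"
    by (simp only: vec_lambda_beta sum_distrib_right)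
  also have "\<dots> = w (\<psi> (\<chi> i j. \<Sum>k\<in>UNIV. \<Sum>l\<in>UNIV. cnj (z$(i,k)) * a$k$l * z$(j,l)))"
    by (rule flinear_expand[OF w f, symmetric])
  finally show ?thesis .
qed

lemma M_psd:
  assumes "psd a"
  shows "psd ((\<chi> i j. \<Sum>k\<in>UNIV. \<Sum>l\<in>UNIV. cnj (z$(i,k)) * a$k$l * z$(j,l)) :: complex^'n^'n)"
  unfolding psd_quad
proof
  fix u :: "'n \<Rightarrow> complex"
  define y where "y l = (\<Sum>j\<in>UNIV. z$(j,l) * u j)" for l
  have "quad UNIV (\<lambda>i j. (\<chi> i j. \<Sum>k\<in>UNIV. \<Sum>l\<in>UNIV. cnj (z$(i,k)) * a$k$l * z$(j,l)) $ i $ j) u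
      = (\<Sum>i\<in>UNIV. \<Sum>j\<in>UNIV. \<Sum>k\<in>UNIV. \<Sum>l\<in>UNIV. cnj (z$(i,k) * u i) * a$k$l * (z$(j,l) * u j))"
    unfolding quad_def by (simp add: sum_distrib_left sum_distrib_right ac_simps)
  also have "\<dots> = (\<Sum>k\<in>UNIV. \<Sum>l\<in>UNIV. \<Sum>i\<in>UNIV. \<Sum>j\<in>UNIV. cnj (z$(i,k) * u i) * a$k$l * (z$(j,l) * u j))"
    by (rule sum_swap4)
  also have "\<dots> = quad UNIV (\<lambda>i j. a$i$j) y"
    unfolding quad_def y_def cnj_sum by (simp add: sum_distrib_left sum_distrib_right ac_simps)
  finally show "cnonneg (quad UNIV (\<lambda>i j. (\<chi> i j. \<Sum>k\<in>UNIV. \<Sum>l\<in>UNIV. cnj (z$(i,k)) * a$k$l * z$(j,l)) $ i $ j) u)"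
    using assms unfolding psd_quad by simp
qed

lemma cont_eval: "continuous_on UNIV (\<lambda>\<alpha>::'x \<Rightarrow> complex^'m^'m. \<alpha> X $ a $ b)"
proof -
  have c1: "continuous_on UNIV (\<lambda>\<alpha>::'x \<Rightarrow> complex^'m^'m. \<alpha> X)" by (rule continuous_on_product_coordinates)
  have c2: "continuous_on UNIV (\<lambda>v::complex^'m^'m. v $ a $ b)"
    by (intro linear_continuous_on bounded_linear_compose[OF bounded_linear_vec_nth bounded_linear_vec_nth])
  show ?thesis using continuous_on_compose2[OF c2 c1] by simp
qed

lemma cont_Qf: "continuous_on UNIV (\<lambda>\<alpha>. Qf \<alpha> \<psi> z)"
  unfolding Qf_def by (intro continuous_intros cont_eval)

lemma closed_C: "closed {\<alpha>. cnonneg (Qf \<alpha> \<psi> z)}"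
proof -
  have "{\<alpha>. cnonneg (Qf \<alpha> \<psi> z)} = {\<alpha>. Im (Qf \<alpha> \<psi> z) = 0} \<inter> {\<alpha>. 0 \<le> Re (Qf \<alpha> \<psi> z)}"
    unfolding cnonneg_def by auto
  moreover have "closed {\<alpha>. Im (Qf \<alpha> \<psi> z) = 0}"
    by (intro closed_Collect_eq continuous_on_Im cont_Qf continuous_on_const)
  moreover have "closed {\<alpha>. 0 \<le> Re (Qf \<alpha> \<psi> z)}"
    by (intro closed_Collect_le continuous_on_Re cont_Qf continuous_on_const)
  ultimately show ?thesis by auto
qed

lemma gen_ok:
  assumes f: "mlinear \<psi>" and pos: "positive_map \<psi>" and a: "\<alpha> \<in> S_gen"
  shows "cnonneg (Qf \<alpha> \<psi> z)"
proof -
  from a obtain k w a where al: "\<alpha> = (\<lambda>x. \<Sum>i<(k::nat). smat (w i x) (a i))"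
    and st: "\<forall>i<k. state (w i) \<and> psd (a i)"
    unfolding S_gen_def by blast
  have "Qf \<alpha> \<psi> z = (\<Sum>i<k. Qf (\<lambda>x. smat (w i x) (a i)) \<psi> z)" unfolding al by (rule Qf_sum)
  also have "cnonneg \<dots>"
  proof (rule cnonneg_sum)
    fix i assume "i \<in> {..<k}"
    then have s: "state (w i)" and p: "psd (a i)" using st by auto
    then have fl: "flinear (w i)" unfolding state_def by auto
    show "cnonneg (Qf (\<lambda>x. smat (w i x) (a i)) \<psi> z)"
      unfolding Qf_gen[OF fl f] using s M_psd[OF p] pos unfolding state_def positive_map_def by blast
  qed
  finally show ?thesis .
qed

lemma cone_ok:
  assumes f: "mlinear \<psi>" and pos: "positive_map \<psi>" and a: "\<alpha> \<in> S_cone"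
  shows "cnonneg (Qf \<alpha> \<psi> z)"
proof -
  from a obtain N c g where al: "\<alpha> = (\<lambda>x. \<Sum>j<(N::nat). c j *\<^sub>R g j x)"
    and cg: "\<forall>j<N. 0 \<le> c j \<and> g j \<in> S_gen"
    unfolding S_cone_def by blast
  have "Qf \<alpha> \<psi> z = (\<Sum>j<N. of_real (c j) * Qf (g j) \<psi> z)" unfolding al Qf_sum Qf_scale ..
  also have "cnonneg \<dots>"
    using cg gen_ok[OF f pos] by (intro cnonneg_sum cnonneg_scale) auto
  finally show ?thesis .
qed

lemma dirB:
  fixes \<psi> :: "complex^'n^'n \<Rightarrow> complex^'m^'m"
  assumes f: "mlinear \<psi>" and pos: "positive_map \<psi>"
  shows "choi \<psi> \<in> PMS"
  unfolding PMS_def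
proof (intro CollectI ballI)
  fix \<alpha> :: "complex^'m^'m \<Rightarrow> complex^'m^'m" assume "\<alpha> \<in> SH"
  show "psd (id_tensor \<alpha> (choi \<psi>))" unfolding psd_choi
  proof
    fix z
    have "SH \<subseteq> {\<alpha>. cnonneg (Qf \<alpha> \<psi> z)}"
      unfolding SH_def by (rule closure_minimal) (use cone_ok[OF f pos] closed_C in auto)
    then show "cnonneg (Qf \<alpha> \<psi> z)" using \<open>\<alpha> \<in> SH\<close> by auto
  qed
qed

lemma cnonneg_div: "0 < r \<Longrightarrow> cnonneg x \<Longrightarrow> cnonneg (x / of_real r)"
  unfolding cnonneg_def by simp

lemma cnonneg_mult_inv: "0 < r \<Longrightarrow> cnonneg (x / of_real r) \<Longrightarrow> cnonneg x"
  unfolding cnonneg_def by (simp add: divide_nonneg_pos) (metis divide_eq_0_iff divide_nonneg_pos le_divide_eq less_irrefl mult_zero_left order.strict_implies_order)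

lemma vc: "v * cnj v = of_real ((norm v)^2)" by (rule complex_norm_square[symmetric])

lemma psd_mat1: "psd (mat 1 :: complex^'k^'k)"
  unfolding psd_def
proof
  fix v :: "complex^'k"
  have "(\<Sum>i\<in>UNIV. \<Sum>j\<in>UNIV. cnj (v $ i) * (mat 1 :: complex^'k^'k) $ i $ j * v $ j) = (\<Sum>i\<in>UNIV. v$i * cnj (v$i))"
    by (simp add: mat_def ifz_mult sum.delta mult.commute cong: if_cong)
  also have "\<dots> = (\<Sum>i\<in>UNIV. of_real ((norm (v$i))^2))" unfolding vc ..
  finally have eq: "(\<Sum>i\<in>UNIV. \<Sum>j\<in>UNIV. cnj (v $ i) * (mat 1 :: complex^'k^'k) $ i $ j * v $ j) = (\<Sum>i\<in>UNIV. of_real ((norm (v$i))^2))" .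
  show "cnonneg (\<Sum>i\<in>UNIV. \<Sum>j\<in>UNIV. cnj (v $ i) * (mat 1 :: complex^'k^'k) $ i $ j * v $ j)"
    unfolding eq cnonneg_def Re_sum Im_sum Re_complex_of_real Im_complex_of_real by (simp add: sum_nonneg)
qed

lemma dirA:
  fixes \<psi> :: "complex^'n^'n \<Rightarrow> complex^'m^'m"
  assumes f: "mlinear \<psi>" and inP: "choi \<psi> \<in> PMS"
  shows "positive_map \<psi>"
  unfolding positive_map_def
proof (intro allI impI)
  fix A :: "complex^'n^'n" assume A: "psd A"
  show "psd (\<psi> A)" unfolding psd_def
  proof
    fix v :: "complex^'m"
    define sr where "sr = (\<Sum>i\<in>UNIV. (norm (v$i))^2)"
    define num where "num y = (\<Sum>i\<in>UNIV. \<Sum>j\<in>UNIV. cnj (v $ i) * y $ i $ j * v $ j)" for y :: "complex^'m^'m"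
    show "cnonneg (num (\<psi> A))" unfolding num_def[symmetric]
    proof (cases "sr = 0")
      case True
      then have "\<forall>i\<in>UNIV. (norm (v$i))^2 = 0" unfolding sr_def
        by (subst sum_nonneg_eq_0_iff[symmetric]) auto
      then have "v$i = 0" for i by simp
      then show ?thesis unfolding num_def cnonneg_def by simp
    next
      case False
      then have sr: "sr > 0" unfolding sr_def by (metis sum_nonneg zero_le_power2 order_le_less)
      define \<omega> where "\<omega> y = num y / of_real sr" for y
      have fl: "flinear \<omega>" unfolding flinear_def
      proof (intro conjI allI)
        fix B C :: "complex^'m^'m"
        show "\<omega> (B + C) = \<omega> B + \<omega> C"
          unfolding \<omega>_def num_def by (simp add: distrib_left distrib_right sum.distrib add_divide_distrib)
      next
        fix c and B :: "complex^'m^'m"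
        show "\<omega> (smat c B) = c * \<omega> B"
          unfolding \<omega>_def num_def smat_def by (simp add: sum_distrib_left ac_simps)
      qed
      have one: "\<omega> (mat 1) = 1"
      proof -
        have "num (mat 1) = (\<Sum>i\<in>UNIV. v$i * cnj (v$i))"
          unfolding num_def by (simp add: mat_def ifz_mult sum.delta mult.commute cong: if_cong)
        also have "\<dots> = of_real sr" unfolding sr_def of_real_sum vc ..
        finally show ?thesis unfolding \<omega>_def using sr by simp
      qed
      have st: "state \<omega>" unfolding state_def
        using fl one sr cnonneg_div unfolding \<omega>_def num_def psd_def by blast
      define \<alpha> where "\<alpha> x = smat (\<omega> x) (mat 1 :: complex^'m^'m)" for x
      have g: "\<alpha> \<in> S_gen" unfolding S_gen_def
      proof (intro CollectI exI conjI)
        show "\<alpha> = (\<lambda>x. \<Sum>i<(1::nat). smat ((\<lambda>_. \<omega>) i x) ((\<lambda>_. mat 1) i))" unfolding \<alpha>_def by simp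
        show "\<forall>i<(1::nat). state ((\<lambda>_. \<omega>) i) \<and> psd ((\<lambda>_. mat 1 :: complex^'m^'m) i)"
          using st psd_mat1 by auto
      qed
      have "\<alpha> \<in> S_cone" unfolding S_cone_def
      proof (intro CollectI exI conjI)
        show "\<alpha> = (\<lambda>x. \<Sum>j<(1::nat). (\<lambda>_. 1) j *\<^sub>R (\<lambda>_. \<alpha>) j x)" by simp
        show "\<forall>j<(1::nat). 0 \<le> ((\<lambda>_. 1::real) j) \<and> (\<lambda>_. \<alpha>) j \<in> S_gen" using g by auto
      qed
      then have "\<alpha> \<in> SH" unfolding SH_def using closure_subset by blast
      then have "psd (id_tensor \<alpha> (choi \<psi>))" using inP unfolding PMS_def by blast
      then have Q: "cnonneg (Qf \<alpha> \<psi> z)" for z unfolding psd_choi by blast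
      define W where "W = (\<chi> i j. \<omega> (\<psi> (matunit i j)) :: complex^'n^'n)"
      have "psd W" unfolding psd_def
      proof
        fix u :: "complex^'n"
        define k0 where "k0 = (undefined :: 'm)"
        define z where "z = (\<chi> p. if snd p = k0 then u $ fst p else 0 :: complex^('n \<times> 'm))"
        have t: "cnj (z$(i,k)) * \<alpha> (\<psi> (matunit (fst (i,k)) (fst (j,l)))) $ snd (i,k) $ snd (j,l) * z$(j,l)
           = (if k = k0 then (if l = k0 then cnj (u$i) * W$i$j * u$j else 0) else 0)" for i j k l
          unfolding z_def \<alpha>_def W_def smat_def by (simp add: mat_def)
        have "Qf \<alpha> \<psi> z = (\<Sum>i\<in>UNIV. \<Sum>j\<in>UNIV. cnj (u$i) * W$i$j * u$j)"
          unfolding Qf_def sum_pair2 t by (simp add: sum_if_const sum.swap[of _ UNIV "UNIV::'m set"])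
        then show "cnonneg (\<Sum>i\<in>UNIV. \<Sum>j\<in>UNIV. cnj (u$i) * W$i$j * u$j)" using Q by metis
      qed
      from frob[OF A this] have "cnonneg (\<omega> (\<psi> A))"
        unfolding flinear_expand[OF fl f, of A] W_def by simp
      then show ?thesis using cnonneg_mult_inv[OF sr] unfolding \<omega>_def by blast
    qed
  qed
qed

lemma choi_PMS_iff:
  fixes \<psi> :: "complex^'n^'n \<Rightarrow> complex^'m^'m"
  assumes "mlinear \<psi>"
  shows "choi \<psi> \<in> PMS \<longleftrightarrow> positive_map \<psi>"
  using dirA[OF assms] dirB[OF assms] by blast

lemma psd_transpose:
  fixes A :: "complex^'k^'k"
  assumes "psd A" shows "psd (transpose A)"
  unfolding psd_def
proof
  fix v :: "complex^'k"
  have h: "cnonneg (\<Sum>i\<in>UNIV. \<Sum>j\<in>UNIV. cnj ((\<chi> k. cnj (v$k)) $ i) * A $ i $ j * (\<chi> k. cnj (v$k)) $ j)"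
    using assms unfolding psd_def by blast
  have "(\<Sum>i\<in>UNIV. \<Sum>j\<in>UNIV. cnj (v $ i) * transpose A $ i $ j * v $ j)
      = (\<Sum>i\<in>UNIV. \<Sum>j\<in>UNIV. cnj (v $ i) * A $ j $ i * v $ j)"
    unfolding transpose_def by simp
  also have "\<dots> = (\<Sum>j\<in>UNIV. \<Sum>i\<in>UNIV. cnj (v $ i) * A $ j $ i * v $ j)" by (rule sum.swap)
  also have "\<dots> = (\<Sum>i\<in>UNIV. \<Sum>j\<in>UNIV. cnj ((\<chi> k. cnj (v$k)) $ i) * A $ i $ j * (\<chi> k. cnj (v$k)) $ j)"
    by (simp add: ac_simps)
  finally show "cnonneg (\<Sum>i\<in>UNIV. \<Sum>j\<in>UNIV. cnj (v $ i) * transpose A $ i $ j * v $ j)"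
    using h by simp
qed

lemma psd_transpose_iff: "psd (transpose (A :: complex^'k^'k)) \<longleftrightarrow> psd A"
  using psd_transpose[of A] psd_transpose[of "transpose A"] by auto

lemma transpose_add': "transpose (A + B :: complex^'k^'k) = transpose A + transpose B"
  by (simp add: transpose_def vec_eq_iff)

lemma transpose_smat: "transpose (smat c (A :: complex^'k^'k)) = smat c (transpose A)"
  by (simp add: transpose_def smat_def vec_eq_iff)

lemma mlinear_tm: "mlinear \<phi> \<Longrightarrow> mlinear (transpose_map \<phi>)"
  unfolding mlinear_def transpose_map_def by (simp add: transpose_add' transpose_smat)

lemma positive_tm: "positive_map (transpose_map \<phi>) \<longleftrightarrow> positive_map \<phi>"
  unfolding positive_map_def transpose_map_def
  by (metis comp_apply psd_transpose_iff transpose_transpose)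

lemma mlinear_of:
  fixes x :: "complex^('n::finite \<times> 'm::finite)^('n \<times> 'm)"
  shows "mlinear (\<lambda>X::complex^'n^'n. (\<chi> k l. \<Sum>i\<in>UNIV. \<Sum>j\<in>UNIV. X$i$j * x$(i,k)$(j,l)) :: complex^'m^'m)"
  unfolding mlinear_def
proof (intro conjI allI)
  fix A B :: "complex^'n^'n"
  show "(\<chi> k l. \<Sum>i\<in>UNIV. \<Sum>j\<in>UNIV. (A + B)$i$j * x$(i,k)$(j,l)) = 
    ((\<chi> k l. \<Sum>i\<in>UNIV. \<Sum>j\<in>UNIV. A$i$j * x$(i,k)$(j,l)) :: complex^'m^'m) + (\<chi> k l. \<Sum>i\<in>UNIV. \<Sum>j\<in>UNIV. B$i$j * x$(i,k)$(j,l))"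
    by (simp only: vec_eq_iff vec_lambda_beta vector_add_component distrib_right sum.distrib) simp
next
  fix c and A :: "complex^'n^'n"
  show "(\<chi> k l. \<Sum>i\<in>UNIV. \<Sum>j\<in>UNIV. smat c A $i$j * x$(i,k)$(j,l)) = 
    smat c ((\<chi> k l. \<Sum>i\<in>UNIV. \<Sum>j\<in>UNIV. A$i$j * x$(i,k)$(j,l)) :: complex^'m^'m)"
    unfolding smat_def by (simp add: vec_eq_iff sum_distrib_left mult.assoc)
qed

lemma choi_of:
  fixes x :: "complex^('n::finite \<times> 'm::finite)^('n \<times> 'm)"
  shows "choi (\<lambda>X::complex^'n^'n. (\<chi> k l. \<Sum>i\<in>UNIV. \<Sum>j\<in>UNIV. X$i$j * x$(i,k)$(j,l)) :: complex^'m^'m) = x"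
proof -
  let ?\<psi> = "(\<lambda>X::complex^'n^'n. (\<chi> k l. \<Sum>i\<in>UNIV. \<Sum>j\<in>UNIV. X$i$j * x$(i,k)$(j,l)) :: complex^'m^'m)"
  have t1: "matunit a b $ i $ j * x$(i,k)$(j,l) = (if a = i then (if b = j then x$(a,k)$(b,l) else 0) else 0)" for a b i j k l
    by (simp add: matunit_def)
  have u: "?\<psi> (matunit a b) = (\<chi> k l. x$(a,k)$(b,l))" for a b
    unfolding t1 by (simp add: sum_if_const vec_eq_iff)
  have t2: "matunit a b $ fst p $ fst q * x$(a, snd p)$(b, snd q) = (if a = fst p then (if b = fst q then x$p$q else 0) else 0)" for a b p q
    by (simp add: matunit_def)
  show ?thesis
    unfolding choi_def kron_def u by (simp add: t2 sum_if_const vec_eq_iff)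
qed

lemma PMS_char:
  "(PMS :: (complex^('n::finite \<times> 'm::finite)^('n \<times> 'm)) set) = {choi \<psi> | \<psi>. mlinear \<psi> \<and> positive_map \<psi>}"
proof
  show "(PMS :: (complex^('n \<times> 'm)^('n \<times> 'm)) set) \<subseteq> {choi \<psi> | \<psi>. mlinear \<psi> \<and> positive_map \<psi>}"
  proof
    fix x :: "complex^('n \<times> 'm)^('n \<times> 'm)" assume x: "x \<in> PMS"
    let ?\<psi> = "(\<lambda>X::complex^'n^'n. (\<chi> k l. \<Sum>i\<in>UNIV. \<Sum>j\<in>UNIV. X$i$j * x$(i,k)$(j,l)) :: complex^'m^'m)"
    have "choi ?\<psi> \<in> PMS" using x unfolding choi_of[of x] .
    then have "positive_map ?\<psi>" using choi_PMS_iff[OF mlinear_of[of x]] by blast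
    then have "x = choi ?\<psi> \<and> mlinear ?\<psi> \<and> positive_map ?\<psi>" using mlinear_of[of x] choi_of[of x] by simp
    then show "x \<in> {choi \<psi> | \<psi>. mlinear \<psi> \<and> positive_map \<psi>}" by blast
  qed
next
  show "{choi \<psi> | \<psi>. mlinear \<psi> \<and> positive_map \<psi>} \<subseteq> (PMS :: (complex^('n \<times> 'm)^('n \<times> 'm)) set)"
  proof
    fix y :: "complex^('n \<times> 'm)^('n \<times> 'm)" assume "y \<in> {choi \<psi> | \<psi>. mlinear \<psi> \<and> positive_map \<psi>}"
    then obtain \<psi> :: "complex^'n^'n \<Rightarrow> complex^'m^'m" where "y = choi \<psi>" "mlinear \<psi>" "positive_map \<psi>" by blast
    then show "y \<in> PMS" using dirB by blast
  qed
qed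

theorem lemma2p2:
  fixes \<phi> :: "complex^'n^'n \<Rightarrow> complex^'m^'m"
  assumes "mlinear \<phi>"
  shows "(positive_map \<phi> \<longleftrightarrow> choi (transpose_map \<phi>) \<in> (PMS :: (complex^('n \<times> 'm)^('n \<times> 'm)) set))
       \<and> (choi (transpose_map \<phi>) \<in> (PMS :: (complex^('n \<times> 'm)^('n \<times> 'm)) set) \<longleftrightarrow> choi \<phi> \<in> PMS)
       \<and> (PMS :: (complex^('n \<times> 'm)^('n \<times> 'm)) set) = {choi \<psi> | \<psi>. mlinear \<psi> \<and> positive_map \<psi>}"
proof -
  have a: "choi (transpose_map \<phi>) \<in> (PMS :: (complex^('n \<times> 'm)^('n \<times> 'm)) set) \<longleftrightarrow> positive_map \<phi>"
    using choi_PMS_iff[OF mlinear_tm[OF assms]] positive_tm[of \<phi>] by simp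
  have b: "choi \<phi> \<in> (PMS :: (complex^('n \<times> 'm)^('n \<times> 'm)) set) \<longleftrightarrow> positive_map \<phi>"
    using choi_PMS_iff[OF assms] .
  show ?thesis using a b PMS_char by simp
qed

end
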